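(* Let $\mathcal B$ be a category with small hom-sets and let $|\text{-}|:\mathcal E\to\mathcal B$ be a concrete category over $\mathcal B$. Then $\mathcal E$ is topological over $\mathcal B$ if and only if the $\mathcal Q_{\mathcal B}$-category $\overline{\mathcal E}$ is total, i.e. the Yoneda $\mathcal Q_{\mathcal B}$-functor $\mathsf Y_{\overline{\mathcal E}}:\overline{\mathcal E}\to\mathsf P\overline{\mathcal E}$ has a left adjoint (equivalently, every presheaf on $\overline{\mathcal E}$ has a supremum).
   Context: A concrete category over $\mathcal B$ is a category $\mathcal E$ with a faithful functor $|\text{-}|:\mathcal E\to\mathcal B$; a map $f:|X|\to|Y|$ in $\mathcal B$ is an $\mathcal E$-morphism if $f=|f'|$ for some $f':X\to Y$ in $\mathcal E$. A structured sink over $T\in\mathrm{ob}\,\mathcal B$ is a (possibly large) family of objects $X_i$ of $\mathcal E$ with maps $f_i:|X_i|\to T$ ($i\in I$); a final lifting is an object $Y$ with $|Y|=T$ such that every $f_i$ is an $\mathcal E$-morphism $X_i\to Y$ and every map $g:T\to|Z|$ is an $\mathcal E$-morphism $Y\to Z$ as soon as all $g\circ f_i$ are $\mathcal E$-morphisms $X_i\to Z$. $\mathcal E$ is topological if every structured sink has a final lifting. A quantaloid is a category whose hom-sets are complete lattices such that composition preserves arbitrary joins in each variable. For $u:S\to T$, $w:S\to U$, define $w\swarrow u:T\to U$ by $v\le w\swarrow u\iff v\circ u\le w$. The free quantaloid $\mathcal Q_{\mathcal B}$ has the objects of $\mathcal B$, $\mathcal Q_{\mathcal B}(S,T)=\{\mathbf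 f\mid \mathbf f\subseteq\mathcal B(S,T)\}$ ordered by inclusion, composition $\mathbf g\circ\mathbf f=\{g\circ f\mid f\in\mathbf f,g\in\mathbf g\}$ and identities $\{1_S\}$. For a quantaloid $\mathcal Q$, a $\mathcal Q$-category $\mathcal E$ consists of a class of objects, an extent $|X|\in\mathrm{ob}\,\mathcal Q$ for each object, and arrows $\mathcal E(X,Y)\in\mathcal Q(|X|,|Y|)$ with $1_{|X|}\le\mathcal E(X,X)$ and $\mathcal E(Y,Z)\circ\mathcal E(X,Y)\le\mathcal E(X,Z)$; a $\mathcal Q$-functor $F:\mathcal E\to\mathcal D$ is an object map with $|FX|=|X|$ and $\mathcal E(X,Y)\le\mathcal D(FX,FY)$; $F\dashv G$ means $\mathcal D(FX,Y)=\mathcal E(X,GY)$ for all $X,Y$. $\overline{\mathcal E}$ is the $\mathcal Q_{\mathcal B}$-category with the objects of $\mathcal E$, extents $|X|$, and $\overline{\mathcal E}(X,Y)$ the set of $\mathcal E$-morphisms $|X|\to|Y|$. A presheaf $\varphi$ of extent $T$ on a $\mathcal Q$-category $\mathcal E$ is a family $\varphi_X:|X|\to T$ ($X\in\mathrm{ob}\,\mathcal E$) with $\varphi_X\circ\mathcal E(X',X)\le\varphi_{X'}$; they form the $\mathcal Q$-category $\mathsf P\mathcal E$ with $|\varphi|=T$ and $\mathsf P\mathcal E(\varphi,\psi)=\bigwedge_X\psi_X\swarrow\varphi_X$. The Yoneda functor is $\mathsf Y_{\mathcal E}Z=\mathcal E(-,Z)$. A supremum of $\varphi$ is an object $Y$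 with $|Y|=|\varphi|$ and $\mathcal E(Y,Z)=\bigwedge_X\mathcal E(X,Z)\swarrow\varphi_X$ for all objects $Z$. *)

theory Defs
  imports Main
begin

section \<open>Categories (hom-sets are sets, hence small)\<close>

record ('o, 'a) cat =
  Obj  :: "'o set"
  Arr  :: "'a set"
  Dom  :: "'a \<Rightarrow> 'o"
  Cod  :: "'a \<Rightarrow> 'o"
  Idt  :: "'o \<Rightarrow> 'a"
  Comp :: "'a \<Rightarrow> 'a \<Rightarrow> 'a"   (* Comp C g f = g \<circ> f *)

definition hom :: "('o, 'a) cat \<Rightarrow> 'o \<Rightarrow> 'o \<Rightarrow> 'a set" where
  "hom C A B = {f \<in> Arr C. Dom C f = A \<and> Cod C f = B}"

definition category :: "('o, 'a) cat \<Rightarrow> bool" where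
  "category C \<longleftrightarrow>
     (\<forall>f \<in> Arr C. Dom C f \<in> Obj C \<and> Cod C f \<in> Obj C) \<and>
     (\<forall>A \<in> Obj C. Idt C A \<in> hom C A A) \<and>
     (\<forall>f \<in> Arr C. \<forall>g \<in> Arr C. Cod C f = Dom C g \<longrightarrow>
         Comp C g f \<in> hom C (Dom C f) (Cod C g)) \<and>
     (\<forall>f \<in> Arr C. Comp C f (Idt C (Dom C f)) = f \<and> Comp C (Idt C (Cod C f)) f = f) \<and>
     (\<forall>f \<in> Arr C. \<forall>g \<in> Arr C. \<forall>h \<in> Arr C. Cod C f = Dom C g \<longrightarrow> Cod C g = Dom C h \<longrightarrow>
         Comp C h (Comp C g f) = Comp C (Comp C h g) f)"

definition "functor" :: "('o, 'a) cat \<Rightarrow> ('p, 'b) cat \<Rightarrow> ('o \<Rightarrow> 'p) \<Rightarrow> ('a \<Rightarrow> 'b) \<Rightarrow> bool" where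
  "functor C D Fo Fa \<longleftrightarrow>
     (\<forall>A \<in> Obj C. Fo A \<in> Obj D) \<and>
     (\<forall>f \<in> Arr C. Fa f \<in> hom D (Fo (Dom C f)) (Fo (Cod C f))) \<and>
     (\<forall>A \<in> Obj C. Fa (Idt C A) = Idt D (Fo A)) \<and>
     (\<forall>f \<in> Arr C. \<forall>g \<in> Arr C. Cod C f = Dom C g \<longrightarrow> Fa (Comp C g f) = Comp D (Fa g) (Fa f))"

definition faithful :: "('o, 'a) cat \<Rightarrow> ('a \<Rightarrow> 'b) \<Rightarrow> bool" where
  "faithful C Fa \<longleftrightarrow> (\<forall>A \<in> Obj C. \<forall>B \<in> Obj C. inj_on Fa (hom C A B))"

definition concrete :: "('o, 'b) cat \<Rightarrow> ('x, 'e) cat \<Rightarrow> ('x \<Rightarrow> 'o) \<Rightarrow> ('e \<Rightarrow> 'b) \<Rightarrow> bool" where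
  "concrete B E Fo Fa \<longleftrightarrow> category B \<and> category E \<and> functor E B Fo Fa \<and> faithful E Fa"

definition emor :: "('o, 'b) cat \<Rightarrow> ('x, 'e) cat \<Rightarrow> ('x \<Rightarrow> 'o) \<Rightarrow> ('e \<Rightarrow> 'b) \<Rightarrow> 'x \<Rightarrow> 'x \<Rightarrow> 'b \<Rightarrow> bool" where
  "emor B E Fo Fa X Y f \<longleftrightarrow> f \<in> hom B (Fo X) (Fo Y) \<and> (\<exists>f' \<in> hom E X Y. Fa f' = f)"

definition structured_sink :: "('o, 'b) cat \<Rightarrow> ('x, 'e) cat \<Rightarrow> ('x \<Rightarrow> 'o) \<Rightarrow> 'o \<Rightarrow> ('x \<times> 'b) set \<Rightarrow> bool" where
  "structured_sink B E Fo T S \<longleftrightarrow> (\<forall>(X, f) \<in> S. X \<in> Obj E \<and> f \<in> hom B (Fo X) T)"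

definition final_lifting ::
  "('o, 'b) cat \<Rightarrow> ('x, 'e) cat \<Rightarrow> ('x \<Rightarrow> 'o) \<Rightarrow> ('e \<Rightarrow> 'b) \<Rightarrow> 'o \<Rightarrow> ('x \<times> 'b) set \<Rightarrow> 'x \<Rightarrow> bool" where
  "final_lifting B E Fo Fa T S Y \<longleftrightarrow>
     Y \<in> Obj E \<and> Fo Y = T \<and>
     (\<forall>(X, f) \<in> S. emor B E Fo Fa X Y f) \<and>
     (\<forall>Z \<in> Obj E. \<forall>g \<in> hom B T (Fo Z).
        (\<forall>(X, f) \<in> S. emor B E Fo Fa X Z (Comp B g f)) \<longrightarrow> emor B E Fo Fa Y Z g)"

definition topological :: "('o, 'b) cat \<Rightarrow> ('x, 'e) cat \<Rightarrow> ('x \<Rightarrow> 'o) \<Rightarrow> ('e \<Rightarrow> 'b) \<Rightarrow> bool" where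
  "topological B E Fo Fa \<longleftrightarrow>
     (\<forall>T \<in> Obj B. \<forall>S. structured_sink B E Fo T S \<longrightarrow> (\<exists>Y. final_lifting B E Fo Fa T S Y))"

definition qcomp :: "('o, 'b) cat \<Rightarrow> 'b set \<Rightarrow> 'b set \<Rightarrow> 'b set" where
  "qcomp B g f = {Comp B g' f' | g' f'. g' \<in> g \<and> f' \<in> f}"

text \<open>Right residual w \<swarrow> u : T \<rightarrow> U in Q_B (for u : S \<rightarrow> T, w : S \<rightarrow> U): largest v \<subseteq> B(T,U) with v \<circ> u \<subseteq> w.\<close>
definition qresid :: "('o, 'b) cat \<Rightarrow> 'b set \<Rightarrow> 'b set \<Rightarrow> 'o \<Rightarrow> 'o \<Rightarrow> 'b set" where
  "qresid B w u T U = {v \<in> hom B T U. \<forall>f \<in> u. Comp B v f \<in> w}"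

record ('c, 'o, 'b) qcat =
  qob  :: "'c set"
  qext :: "'c \<Rightarrow> 'o"
  qhom :: "'c \<Rightarrow> 'c \<Rightarrow> 'b set"

definition is_qcat :: "('o, 'b) cat \<Rightarrow> ('c, 'o, 'b) qcat \<Rightarrow> bool" where
  "is_qcat B C \<longleftrightarrow>
     (\<forall>X \<in> qob C. qext C X \<in> Obj B) \<and>
     (\<forall>X \<in> qob C. \<forall>Y \<in> qob C. qhom C X Y \<subseteq> hom B (qext C X) (qext C Y)) \<and>
     (\<forall>X \<in> qob C. {Idt B (qext C X)} \<subseteq> qhom C X X) \<and>
     (\<forall>X \<in> qob C. \<forall>Y \<in> qob C. \<forall>Z \<in> qob C. qcomp B (qhom C Y Z) (qhom C X Y) \<subseteq> qhom C X Z)"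

definition qfunctor :: "('c, 'o, 'b) qcat \<Rightarrow> ('d, 'o, 'b) qcat \<Rightarrow> ('c \<Rightarrow> 'd) \<Rightarrow> bool" where
  "qfunctor C D F \<longleftrightarrow>
     (\<forall>X \<in> qob C. F X \<in> qob D \<and> qext D (F X) = qext C X) \<and>
     (\<forall>X \<in> qob C. \<forall>Y \<in> qob C. qhom C X Y \<subseteq> qhom D (F X) (F Y))"

definition qadjoint :: "('c, 'o, 'b) qcat \<Rightarrow> ('d, 'o, 'b) qcat \<Rightarrow> ('c \<Rightarrow> 'd) \<Rightarrow> ('d \<Rightarrow> 'c) \<Rightarrow> bool" where
  "qadjoint C D F G \<longleftrightarrow> qfunctor C D F \<and> qfunctor D C G \<and>
     (\<forall>X \<in> qob C. \<forall>Y \<in> qob D. qhom D (F X) Y = qhom C X (G Y))"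

definition Ebar :: "('o, 'b) cat \<Rightarrow> ('x, 'e) cat \<Rightarrow> ('x \<Rightarrow> 'o) \<Rightarrow> ('e \<Rightarrow> 'b) \<Rightarrow> ('x, 'o, 'b) qcat" where
  "Ebar B E Fo Fa = \<lparr>qob = Obj E, qext = Fo, qhom = (\<lambda>X Y. {f. emor B E Fo Fa X Y f})\<rparr>"

definition presheaf :: "('o, 'b) cat \<Rightarrow> ('c, 'o, 'b) qcat \<Rightarrow> 'o \<Rightarrow> ('c \<Rightarrow> 'b set) \<Rightarrow> bool" where
  "presheaf B C T \<phi> \<longleftrightarrow> T \<in> Obj B \<and>
     (\<forall>X \<in> qob C. \<phi> X \<subseteq> hom B (qext C X) T) \<and>
     (\<forall>X. X \<notin> qob C \<longrightarrow> \<phi> X = {}) \<and>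
     (\<forall>X \<in> qob C. \<forall>X' \<in> qob C. qcomp B (\<phi> X) (qhom C X' X) \<subseteq> \<phi> X')"

definition Psh :: "('o, 'b) cat \<Rightarrow> ('c, 'o, 'b) qcat \<Rightarrow> ('o \<times> ('c \<Rightarrow> 'b set), 'o, 'b) qcat" where
  "Psh B C = \<lparr>qob = {(T, \<phi>). presheaf B C T \<phi>}, qext = fst,
     qhom = (\<lambda>(T, \<phi>) (U, \<psi>). hom B T U \<inter> (\<Inter>X \<in> qob C. qresid B (\<psi> X) (\<phi> X) T U))\<rparr>"

definition yoneda :: "('c, 'o, 'b) qcat \<Rightarrow> 'c \<Rightarrow> 'o \<times> ('c \<Rightarrow> 'b set)" where
  "yoneda C Z = (qext C Z, \<lambda>X. if X \<in> qob C then qhom C X Z else {})"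

definition total :: "('o, 'b) cat \<Rightarrow> ('c, 'o, 'b) qcat \<Rightarrow> bool" where
  "total B C \<longleftrightarrow> (\<exists>F. qadjoint (Psh B C) C F (yoneda C))"

end

theory Submission
  imports Defs
begin

lemma cat_comp: "category B \<Longrightarrow> f \<in> hom B X Y \<Longrightarrow> g \<in> hom B Y Z \<Longrightarrow> Comp B g f \<in> hom B X Z"
  unfolding category_def hom_def by auto
lemma cat_idl: "category B \<Longrightarrow> f \<in> hom B X Y \<Longrightarrow> Comp B (Idt B Y) f = f"
  unfolding category_def hom_def by auto
lemma cat_idr: "category B \<Longrightarrow> f \<in> hom B X Y \<Longrightarrow> Comp B f (Idt B X) = f"
  unfolding category_def hom_def by auto
lemma cat_id: "category B \<Longrightarrow> X \<in> Obj B \<Longrightarrow> Idt B X \<in> hom B X X"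
  unfolding category_def by auto
lemma cat_assoc: "category B \<Longrightarrow> f \<in> hom B X Y \<Longrightarrow> g \<in> hom B Y Z \<Longrightarrow> h \<in> hom B Z W
   \<Longrightarrow> Comp B h (Comp B g f) = Comp B (Comp B h g) f"
  unfolding category_def hom_def by auto

lemma emor_hom: "emor B E Fo Fa X Y f \<Longrightarrow> f \<in> hom B (Fo X) (Fo Y)"
  unfolding emor_def by auto

lemma emor_comp:
  assumes c: "concrete B E Fo Fa" and f: "emor B E Fo Fa X Y f" and g: "emor B E Fo Fa Y Z g"
  shows "emor B E Fo Fa X Z (Comp B g f)"
proof -
  from c have cB: "category B" and cE: "category E" and F: "functor E B Fo Fa"
    unfolding concrete_def by auto
  from f obtain f' where f': "f' \<in> hom E X Y" "Fa f' = f" "f \<in> hom B (Fo X) (Fo Y)" unfolding emor_def by auto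
  from g obtain g' where g': "g' \<in> hom E Y Z" "Fa g' = g" "g \<in> hom B (Fo Y) (Fo Z)" unfolding emor_def by auto
  have "Comp E g' f' \<in> hom E X Z" using cat_comp[OF cE f'(1) g'(1)] .
  moreover have "Fa (Comp E g' f') = Comp B g f"
    using F f' g' unfolding functor_def hom_def by auto
  ultimately show ?thesis using cat_comp[OF cB f'(3) g'(3)] unfolding emor_def by blast
qed

lemma emor_id:
  assumes c: "concrete B E Fo Fa" and X: "X \<in> Obj E"
  shows "emor B E Fo Fa X X (Idt B (Fo X))"
proof -
  from c have cB: "category B" and cE: "category E" and F: "functor E B Fo Fa"
    unfolding concrete_def by auto
  have "Idt E X \<in> hom E X X" using cat_id[OF cE X] .
  moreover have "Fa (Idt E X) = Idt B (Fo X)" using F X unfolding functor_def by auto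
  moreover have "Fo X \<in> Obj B" using F X unfolding functor_def by auto
  ultimately show ?thesis using cat_id[OF cB] unfolding emor_def by blast
qed

lemma emor_obj: "concrete B E Fo Fa \<Longrightarrow> emor B E Fo Fa X Y f \<Longrightarrow> X \<in> Obj E \<and> Y \<in> Obj E"
  unfolding concrete_def category_def emor_def hom_def by fastforce

definition issup where
  "issup B E Fo Fa T \<phi> Y \<longleftrightarrow> Y \<in> Obj E \<and> Fo Y = T \<and>
     (\<forall>Z\<in>Obj E. \<forall>g. emor B E Fo Fa Y Z g \<longleftrightarrow>
        g \<in> hom B T (Fo Z) \<and> (\<forall>X\<in>Obj E. \<forall>f\<in>\<phi> X. emor B E Fo Fa X Z (Comp B g f)))"

lemma psh_ob: "((T, \<phi>) \<in> qob (Psh B C)) = presheaf B C T \<phi>"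
  unfolding Psh_def by auto

lemma psh_yon:
  "qhom (Psh B (Ebar B E Fo Fa)) (T, \<phi>) (yoneda (Ebar B E Fo Fa) Z) =
   {g \<in> hom B T (Fo Z). \<forall>X\<in>Obj E. \<forall>f\<in>\<phi> X. emor B E Fo Fa X Z (Comp B g f)}"
  unfolding Psh_def yoneda_def Ebar_def qresid_def by auto

lemma yon_presheaf:
  assumes c: "concrete B E Fo Fa" and Z: "Z \<in> Obj E"
  shows "presheaf B (Ebar B E Fo Fa) (Fo Z) (snd (yoneda (Ebar B E Fo Fa) Z))"
proof -
  have "Fo Z \<in> Obj B" using c Z unfolding concrete_def functor_def by auto
  moreover have "\<forall>X\<in>Obj E. \<forall>X'\<in>Obj E. qcomp B {f. emor B E Fo Fa X Z f} {f. emor B E Fo Fa X' X f}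
     \<subseteq> {f. emor B E Fo Fa X' Z f}"
    unfolding qcomp_def using emor_comp[OF c] by blast
  ultimately show ?thesis unfolding presheaf_def yoneda_def Ebar_def using emor_hom by auto
qed

lemma yon_functor:
  assumes c: "concrete B E Fo Fa"
  shows "qfunctor (Ebar B E Fo Fa) (Psh B (Ebar B E Fo Fa)) (yoneda (Ebar B E Fo Fa))"
  unfolding qfunctor_def
proof (intro conjI ballI)
  fix X assume X: "X \<in> qob (Ebar B E Fo Fa)"
  hence XE: "X \<in> Obj E" unfolding Ebar_def by auto
  show "yoneda (Ebar B E Fo Fa) X \<in> qob (Psh B (Ebar B E Fo Fa))"
    using yon_presheaf[OF c XE] unfolding Psh_def by (simp add: yoneda_def Ebar_def)
  show "qext (Psh B (Ebar B E Fo Fa)) (yoneda (Ebar B E Fo Fa) X) = qext (Ebar B E Fo Fa) X"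
    unfolding Psh_def yoneda_def by simp
next
  fix X Y assume X: "X \<in> qob (Ebar B E Fo Fa)" and Y: "Y \<in> qob (Ebar B E Fo Fa)"
  have "yoneda (Ebar B E Fo Fa) X = (Fo X, snd (yoneda (Ebar B E Fo Fa) X))"
    unfolding yoneda_def Ebar_def by simp
  show "qhom (Ebar B E Fo Fa) X Y \<subseteq> qhom (Psh B (Ebar B E Fo Fa)) (yoneda (Ebar B E Fo Fa) X) (yoneda (Ebar B E Fo Fa) Y)"
  proof
    fix g assume "g \<in> qhom (Ebar B E Fo Fa) X Y"
    hence g: "emor B E Fo Fa X Y g" unfolding Ebar_def by simp
    have "g \<in> {g \<in> hom B (Fo X) (Fo Y). \<forall>W\<in>Obj E. \<forall>f\<in>snd (yoneda (Ebar B E Fo Fa) X) W. emor B E Fo Fa W Y (Comp B g f)}"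
      using g emor_hom[OF g] emor_comp[OF c _ g] unfolding yoneda_def Ebar_def by auto
    thus "g \<in> qhom (Psh B (Ebar B E Fo Fa)) (yoneda (Ebar B E Fo Fa) X) (yoneda (Ebar B E Fo Fa) Y)"
      using psh_yon[of B E Fo Fa "Fo X" "snd (yoneda (Ebar B E Fo Fa) X)" Y]
      by (simp add: yoneda_def Ebar_def)
  qed
qed

lemma total_imp_sup:
  assumes c: "concrete B E Fo Fa" and t: "total B (Ebar B E Fo Fa)" and p: "presheaf B (Ebar B E Fo Fa) T \<phi>"
  shows "\<exists>Y. issup B E Fo Fa T \<phi> Y"
proof -
  from t obtain F where adj: "qadjoint (Psh B (Ebar B E Fo Fa)) (Ebar B E Fo Fa) F (yoneda (Ebar B E Fo Fa))"
    unfolding total_def by auto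
  have pq: "(T, \<phi>) \<in> qob (Psh B (Ebar B E Fo Fa))" using p psh_ob by metis
  have Y: "F (T, \<phi>) \<in> Obj E" "Fo (F (T, \<phi>)) = T"
    using adj pq unfolding qadjoint_def qfunctor_def by (auto simp: Ebar_def Psh_def)
  have "\<forall>Z\<in>Obj E. \<forall>g. emor B E Fo Fa (F (T, \<phi>)) Z g \<longleftrightarrow>
        g \<in> hom B T (Fo Z) \<and> (\<forall>X\<in>Obj E. \<forall>f\<in>\<phi> X. emor B E Fo Fa X Z (Comp B g f))"
  proof (intro ballI allI)
    fix Z g assume Z: "Z \<in> Obj E"
    have "qhom (Ebar B E Fo Fa) (F (T, \<phi>)) Z = qhom (Psh B (Ebar B E Fo Fa)) (T, \<phi>) (yoneda (Ebar B E Fo Fa) Z)"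
      using adj pq Z unfolding qadjoint_def by (auto simp: Ebar_def)
    thus "emor B E Fo Fa (F (T, \<phi>)) Z g \<longleftrightarrow>
        g \<in> hom B T (Fo Z) \<and> (\<forall>X\<in>Obj E. \<forall>f\<in>\<phi> X. emor B E Fo Fa X Z (Comp B g f))"
      unfolding psh_yon by (auto simp: Ebar_def)
  qed
  thus ?thesis using Y unfolding issup_def by blast
qed

lemma sup_imp_total:
  assumes c: "concrete B E Fo Fa"
    and s: "\<And>T \<phi>. presheaf B (Ebar B E Fo Fa) T \<phi> \<Longrightarrow> \<exists>Y. issup B E Fo Fa T \<phi> Y"
  shows "total B (Ebar B E Fo Fa)"
proof -
  from c have cB: "category B" unfolding concrete_def by auto
  define F where "F = (\<lambda>(T, \<phi>). SOME Y. issup B E Fo Fa T \<phi> Y)"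
  have FS: "issup B E Fo Fa T \<phi> (F (T, \<phi>))" if "presheaf B (Ebar B E Fo Fa) T \<phi>" for T \<phi>
    using s[OF that] unfolding F_def by (auto intro: someI_ex)
  have adjeq: "qhom (Ebar B E Fo Fa) (F (T, \<phi>)) Z = qhom (Psh B (Ebar B E Fo Fa)) (T, \<phi>) (yoneda (Ebar B E Fo Fa) Z)"
    if "presheaf B (Ebar B E Fo Fa) T \<phi>" "Z \<in> Obj E" for T \<phi> Z
    using FS[OF that(1)] that(2) unfolding psh_yon issup_def by (auto simp: Ebar_def)
  have "qfunctor (Psh B (Ebar B E Fo Fa)) (Ebar B E Fo Fa) F"
    unfolding qfunctor_def
  proof (intro conjI ballI)
    fix p assume "p \<in> qob (Psh B (Ebar B E Fo Fa))"
    then obtain T \<phi> where p: "p = (T, \<phi>)" "presheaf B (Ebar B E Fo Fa) T \<phi>"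
      using psh_ob by (metis surj_pair)
    show "F p \<in> qob (Ebar B E Fo Fa)" "qext (Ebar B E Fo Fa) (F p) = qext (Psh B (Ebar B E Fo Fa)) p"
      using FS[OF p(2)] p(1) unfolding issup_def by (auto simp: Ebar_def Psh_def)
  next
    fix p p' assume "p \<in> qob (Psh B (Ebar B E Fo Fa))" "p' \<in> qob (Psh B (Ebar B E Fo Fa))"
    then obtain T \<phi> T' \<phi>' where p: "p = (T, \<phi>)" "presheaf B (Ebar B E Fo Fa) T \<phi>"
      and p': "p' = (T', \<phi>')" "presheaf B (Ebar B E Fo Fa) T' \<phi>'"
      using psh_ob by (metis surj_pair)
    have S': "issup B E Fo Fa T' \<phi>' (F (T', \<phi>'))" using FS[OF p'(2)] .
    let ?Y = "F (T', \<phi>')"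
    have YE: "?Y \<in> Obj E" and YT: "Fo ?Y = T'" using S' unfolding issup_def by auto
    have idY: "emor B E Fo Fa ?Y ?Y (Idt B T')" using emor_id[OF c YE] YT by simp
    have phi'_sub: "emor B E Fo Fa X ?Y h" if "X \<in> Obj E" "h \<in> \<phi>' X" for X h
    proof -
      have "emor B E Fo Fa X ?Y (Comp B (Idt B T') h)" using S' YE idY that unfolding issup_def by blast
      moreover have "h \<in> hom B (Fo X) T'" using p'(2) that unfolding presheaf_def by (auto simp: Ebar_def)
      ultimately show ?thesis using cat_idl[OF cB] by metis
    qed
    show "qhom (Psh B (Ebar B E Fo Fa)) p p' \<subseteq> qhom (Ebar B E Fo Fa) (F p) (F p')"
    proof
      fix g assume "g \<in> qhom (Psh B (Ebar B E Fo Fa)) p p'"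
      hence g: "g \<in> hom B T T'" "\<And>X f. X \<in> Obj E \<Longrightarrow> f \<in> \<phi> X \<Longrightarrow> Comp B g f \<in> \<phi>' X"
        unfolding p p' Psh_def qresid_def by (auto simp: Ebar_def)
      have "emor B E Fo Fa (F p) ?Y g"
        using FS[OF p(2)] YE g phi'_sub YT unfolding issup_def p by auto
      thus "g \<in> qhom (Ebar B E Fo Fa) (F p) (F p')" using p' by (simp add: Ebar_def)
    qed
  qed
  moreover have "\<forall>X\<in>qob (Psh B (Ebar B E Fo Fa)). \<forall>Y\<in>qob (Ebar B E Fo Fa).
     qhom (Ebar B E Fo Fa) (F X) Y = qhom (Psh B (Ebar B E Fo Fa)) X (yoneda (Ebar B E Fo Fa) Y)"
  proof (intro ballI)
    fix p Z assume "p \<in> qob (Psh B (Ebar B E Fo Fa))" "Z \<in> qob (Ebar B E Fo Fa)"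
    moreover then obtain T \<phi> where "p = (T, \<phi>)" using surj_pair by metis
    ultimately have "presheaf B (Ebar B E Fo Fa) T \<phi>" "Z \<in> Obj E" "p = (T, \<phi>)"
      using psh_ob[of T \<phi> B "Ebar B E Fo Fa"] by (auto simp: Ebar_def)
    thus "qhom (Ebar B E Fo Fa) (F p) Z = qhom (Psh B (Ebar B E Fo Fa)) p (yoneda (Ebar B E Fo Fa) Z)"
      using adjeq by blast
  qed
  ultimately show ?thesis unfolding total_def qadjoint_def using yon_functor[OF c] by blast
qed

lemma top_imp_sup:
  assumes c: "concrete B E Fo Fa" and t: "topological B E Fo Fa" and p: "presheaf B (Ebar B E Fo Fa) T \<phi>"
  shows "\<exists>Y. issup B E Fo Fa T \<phi> Y"
proof -
  let ?S = "{(X, f). X \<in> Obj E \<and> f \<in> \<phi> X}"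
  have T: "T \<in> Obj B" using p unfolding presheaf_def by auto
  have "structured_sink B E Fo T ?S" using p unfolding structured_sink_def presheaf_def by (auto simp: Ebar_def)
  then obtain Y where Y: "final_lifting B E Fo Fa T ?S Y" using t T unfolding topological_def by blast
  have "\<forall>Z\<in>Obj E. \<forall>g. emor B E Fo Fa Y Z g \<longleftrightarrow>
        g \<in> hom B T (Fo Z) \<and> (\<forall>X\<in>Obj E. \<forall>f\<in>\<phi> X. emor B E Fo Fa X Z (Comp B g f))"
  proof (intro ballI allI iffI)
    fix Z g assume "emor B E Fo Fa Y Z g"
    thus "g \<in> hom B T (Fo Z) \<and> (\<forall>X\<in>Obj E. \<forall>f\<in>\<phi> X. emor B E Fo Fa X Z (Comp B g f))"
      using Y emor_hom emor_comp[OF c] unfolding final_lifting_def by fastforce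
  next
    fix Z g assume "Z \<in> Obj E" "g \<in> hom B T (Fo Z) \<and> (\<forall>X\<in>Obj E. \<forall>f\<in>\<phi> X. emor B E Fo Fa X Z (Comp B g f))"
    thus "emor B E Fo Fa Y Z g" using Y unfolding final_lifting_def by auto
  qed
  thus ?thesis using Y unfolding issup_def final_lifting_def by blast
qed

lemma sup_imp_top:
  assumes c: "concrete B E Fo Fa"
    and s: "\<And>T \<phi>. presheaf B (Ebar B E Fo Fa) T \<phi> \<Longrightarrow> \<exists>Y. issup B E Fo Fa T \<phi> Y"
  shows "topological B E Fo Fa"
  unfolding topological_def
proof (intro ballI allI impI)
  from c have cB: "category B" unfolding concrete_def by auto
  fix T S assume T: "T \<in> Obj B" and S: "structured_sink B E Fo T S"
  define \<phi> where "\<phi> X = {Comp B f h | f h. \<exists>X'. (X', f) \<in> S \<and> emor B E Fo Fa X X' h}" for X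
  have Shom: "X \<in> Obj E" "f \<in> hom B (Fo X) T" if "(X, f) \<in> S" for X f
    using S that unfolding structured_sink_def by auto
  have phi_hom: "\<phi> X \<subseteq> hom B (Fo X) T" for X
  proof
    fix u assume "u \<in> \<phi> X"
    then obtain f h X' where u: "u = Comp B f h" and fS: "(X', f) \<in> S" and h: "emor B E Fo Fa X X' h"
      unfolding \<phi>_def by auto
    show "u \<in> hom B (Fo X) T" using u cat_comp[OF cB emor_hom[OF h] Shom(2)[OF fS]] by simp
  qed
  have "presheaf B (Ebar B E Fo Fa) T \<phi>"
    unfolding presheaf_def
  proof (intro conjI ballI allI impI)
    show "T \<in> Obj B" by fact
  next
    fix X show "\<phi> X \<subseteq> hom B (qext (Ebar B E Fo Fa) X) T" using phi_hom by (simp add: Ebar_def)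
  next
    fix X assume "X \<notin> qob (Ebar B E Fo Fa)"
    thus "\<phi> X = {}" unfolding \<phi>_def using emor_obj[OF c] by (auto simp: Ebar_def)
  next
    fix X X' assume "X \<in> qob (Ebar B E Fo Fa)" "X' \<in> qob (Ebar B E Fo Fa)"
    show "qcomp B (\<phi> X) (qhom (Ebar B E Fo Fa) X' X) \<subseteq> \<phi> X'"
    proof
      fix u assume "u \<in> qcomp B (\<phi> X) (qhom (Ebar B E Fo Fa) X' X)"
      then obtain f h k X'' where u: "u = Comp B (Comp B f h) k" and fS: "(X'', f) \<in> S"
        and h: "emor B E Fo Fa X X'' h" and k: "emor B E Fo Fa X' X k"
        unfolding qcomp_def \<phi>_def by (auto simp: Ebar_def)
      have "u = Comp B f (Comp B h k)"
        using u cat_assoc[OF cB emor_hom[OF k] emor_hom[OF h] Shom(2)[OF fS]] by simp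
      moreover have "emor B E Fo Fa X' X'' (Comp B h k)" using emor_comp[OF c k h] .
      ultimately show "u \<in> \<phi> X'" unfolding \<phi>_def using fS by blast
    qed
  qed
  then obtain Y where Y: "issup B E Fo Fa T \<phi> Y" using s by blast
  have YE: "Y \<in> Obj E" and YT: "Fo Y = T" using Y unfolding issup_def by auto
  have idY: "emor B E Fo Fa Y Y (Idt B T)" using emor_id[OF c YE] YT by simp
  have fphi: "f \<in> \<phi> X" if "(X, f) \<in> S" for X f
  proof -
    have "emor B E Fo Fa X X (Idt B (Fo X))" using emor_id[OF c Shom(1)[OF that]] .
    moreover have "Comp B f (Idt B (Fo X)) = f" using cat_idr[OF cB Shom(2)[OF that]] .
    ultimately show ?thesis unfolding \<phi>_def using that by force
  qed
  have "final_lifting B E Fo Fa T S Y"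
    unfolding final_lifting_def
  proof (intro conjI ballI impI)
    show "Y \<in> Obj E" "Fo Y = T" by fact+
  next
    fix Xf assume "Xf \<in> S"
    then obtain X f where Xf: "Xf = (X, f)" "(X, f) \<in> S" by (cases Xf) auto
    have "emor B E Fo Fa X Y (Comp B (Idt B T) f)"
      using Y YE idY Shom(1)[OF Xf(2)] fphi[OF Xf(2)] unfolding issup_def by blast
    thus "case Xf of (X, f) \<Rightarrow> emor B E Fo Fa X Y f"
      using Xf cat_idl[OF cB Shom(2)[OF Xf(2)]] by simp
  next
    fix Z g assume Z: "Z \<in> Obj E" and g: "g \<in> hom B T (Fo Z)"
      and all: "\<forall>(X, f)\<in>S. emor B E Fo Fa X Z (Comp B g f)"
    have "\<forall>X\<in>Obj E. \<forall>u\<in>\<phi> X. emor B E Fo Fa X Z (Comp B g u)"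
    proof (intro ballI)
      fix X u assume "X \<in> Obj E" "u \<in> \<phi> X"
      then obtain f h X' where u: "u = Comp B f h" and fS: "(X', f) \<in> S" and h: "emor B E Fo Fa X X' h"
        unfolding \<phi>_def by auto
      have "Comp B g u = Comp B (Comp B g f) h"
        using u cat_assoc[OF cB emor_hom[OF h] Shom(2)[OF fS] g] by simp
      moreover have "emor B E Fo Fa X' Z (Comp B g f)" using all fS by auto
      ultimately show "emor B E Fo Fa X Z (Comp B g u)" using emor_comp[OF c h] by simp
    qed
    thus "emor B E Fo Fa Y Z g" using Y Z g unfolding issup_def by blast
  qed
  thus "\<exists>Y. final_lifting B E Fo Fa T S Y" by blast
qed

theorem theorem3p2:
  fixes B :: "('o, 'b) cat" and E :: "('x, 'e) cat"
    and Fo :: "'x \<Rightarrow> 'o" and Fa :: "'e \<Rightarrow> 'b"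
  assumes "category B"
    and "concrete B E Fo Fa"
  shows "topological B E Fo Fa \<longleftrightarrow> total B (Ebar B E Fo Fa)"
  using top_imp_sup[OF assms(2)] sup_imp_total[OF assms(2)] total_imp_sup[OF assms(2)] sup_imp_top[OF assms(2)]
  by blast

end
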